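(* Let $N_\mathrm{T},N_\mathrm{R},N_\mathrm{S}$ be positive integers, let $\mathbf{H}_\mathrm{D}\in\mathbb{C}^{N_\mathrm{R}\times N_\mathrm{T}}$, $\mathbf{H}_\mathrm{B}\in\mathbb{C}^{N_\mathrm{R}\times N_\mathrm{S}}$, $\mathbf{H}_\mathrm{F}\in\mathbb{C}^{N_\mathrm{S}\times N_\mathrm{T}}$, and for a scattering matrix $\mathbf{\Theta}\in\mathbb{C}^{N_\mathrm{S}\times N_\mathrm{S}}$ let $\mathbf{H}(\mathbf{\Theta})=\mathbf{H}_\mathrm{D}+\mathbf{H}_\mathrm{B}\mathbf{\Theta}\mathbf{H}_\mathrm{F}$. A BD-RIS may achieve a larger or a smaller MIMO DoF than a D-RIS. Precisely: (i) there exist $N_\mathrm{T},N_\mathrm{R},N_\mathrm{S}$ and channels $\mathbf{H}_\mathrm{D},\mathbf{H}_\mathrm{B},\mathbf{H}_\mathrm{F}$ such that $\max_{\mathbf{\Theta}\text{ BD}}\mathrm{DoF}(\mathbf{H}(\mathbf{\Theta}))>\max_{\mathbf{\Theta}\text{ D}}\mathrm{DoF}(\mathbf{H}(\mathbf{\Theta}))$; and (ii) there exist $N_\mathrm{T},N_\mathrm{R},N_\mathrm{S}$ and channels such that $\min_{\mathbf{\Theta}\text{ BD}}\mathrm{DoF}(\mathbf{H}(\mathbf{\Theta}))<\min_{\mathbf{\Theta}\text{ D}}\mathrm{DoF}(\mathbf{H}(\mathbf{\Theta}))$, where "BD" ranges over all unitary $\mathbf{\Theta}\in\mathbb{U}^{N_\mathrm{S}\times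 N_\mathrm{S}}$ (fully-connected BD-RIS) and "D" over all diagonal $\mathbf{\Theta}=\mathrm{diag}(e^{\jmath\theta_1},\ldots,e^{\jmath\theta_{N_\mathrm{S}}})$, $\theta_i\in\mathbb{R}$ (D-RIS).
   Context: $\mathbb{U}^{n\times n}$ denotes the set of $n\times n$ complex unitary matrices. The degrees of freedom of a matrix $\mathbf{H}$ are $\mathrm{DoF}(\mathbf{H})=\lim_{\rho\to\infty}\frac{\log\det(\mathbf{I}+\rho\mathbf{H}\mathbf{H}^\mathsf{H})}{\log\rho}$ (the number of parallel streams supported at asymptotically high SNR $\rho$). A diagonal RIS (D-RIS) has diagonal scattering matrix with unit-modulus diagonal entries; a fully-connected beyond-diagonal RIS (BD-RIS) has an arbitrary unitary scattering matrix. *)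

theory Defs
  imports Complex_Main "Jordan_Normal_Form.Determinant"
begin

definition herm :: "complex mat \<Rightarrow> complex mat" where
  "herm A = mat (dim_col A) (dim_row A) (\<lambda>(i,j). cnj (A $$ (j,i)))"

text \<open>Degrees of freedom: lim_{rho -> oo} log det(I + rho H H^H) / log rho.
  The determinant is real and positive (Hermitian positive definite), we take its real part.\<close>
definition DoF :: "complex mat \<Rightarrow> real" where
  "DoF H = Lim at_top
     (\<lambda>\<rho>::real. ln (Re (det (1\<^sub>m (dim_row H) + complex_of_real \<rho> \<cdot>\<^sub>m (H * herm H)))) / ln \<rho>)"

definition unitary_mats :: "nat \<Rightarrow> complex mat set" where
  "unitary_mats n = {U. U \<in> carrier_mat n n \<and> U * herm U = 1\<^sub>m n}"

definition diag_ris_mats :: "nat \<Rightarrow> complex mat set" where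
  "diag_ris_mats n = {mat_diag n (\<lambda>i. cis (\<theta> i)) | \<theta>. \<theta> \<in> (UNIV :: (nat \<Rightarrow> real) set)}"

definition ris_channel :: "complex mat \<Rightarrow> complex mat \<Rightarrow> complex mat \<Rightarrow> complex mat \<Rightarrow> complex mat" where
  "ris_channel HD HB HF \<Theta> = HD + HB * \<Theta> * HF"

end

theory Submission
  imports Defs "HOL-Real_Asymp.Real_Asymp"
begin


lemma lim1: assumes "a > (0::real)" shows "((\<lambda>r::real. ln (1 + r * a) / ln r) \<longlongrightarrow> 1) at_top"
  using assms by real_asymp

lemma DoF_1: assumes "H \<in> carrier_mat 1 1"
  shows "DoF H = (if H $$ (0,0) = 0 then 0 else 1)"
proof -
  let ?a = "(cmod (H $$ (0,0)))^2"
  have e: "Re (det (1\<^sub>m (dim_row H) + complex_of_real r \<cdot>\<^sub>m (H * herm H))) = 1 + r * ?a" for r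
  proof -
    have "1\<^sub>m (dim_row H) + complex_of_real r \<cdot>\<^sub>m (H * herm H) \<in> carrier_mat 1 1"
      using assms by (auto simp: herm_def)
    then have "det (1\<^sub>m (dim_row H) + complex_of_real r \<cdot>\<^sub>m (H * herm H)) = 
       (1\<^sub>m (dim_row H) + complex_of_real r \<cdot>\<^sub>m (H * herm H)) $$ (0,0)" by (rule det_single)
    also have "\<dots> = 1 + r * (H$$(0,0) * cnj (H$$(0,0)))"
      using assms by (auto simp: herm_def scalar_prod_def)
    finally show ?thesis by (simp add: complex_mult_cnj cmod_power2)
  qed
  show ?thesis
  proof (cases "H $$ (0,0) = 0")
    case True
    then show ?thesis unfolding DoF_def e
      using tendsto_Lim[OF trivial_limit_at_top_linorder tendsto_const, of 0] by simp
  next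
    case False
    then have "?a > 0" by simp
    from tendsto_Lim[OF trivial_limit_at_top_linorder lim1[OF this]] False
    show ?thesis unfolding DoF_def e by simp
  qed
qed

definition HB0 :: "complex mat" where "HB0 = mat 1 2 (\<lambda>(i,j). if j = 0 then 1 else 0)"
definition HF1 :: "complex mat" where "HF1 = mat 2 1 (\<lambda>(i,j). if i = 1 then 1 else 0)"
definition HF0 :: "complex mat" where "HF0 = mat 2 1 (\<lambda>(i,j). if i = 0 then 1 else 0)"
definition HDa :: "complex mat" where "HDa = mat 1 1 (\<lambda>_. 3/5)"

lemma ch1: assumes "T \<in> carrier_mat 2 2"
  shows "ris_channel (0\<^sub>m 1 1) HB0 HF1 T \<in> carrier_mat 1 1"
    "ris_channel (0\<^sub>m 1 1) HB0 HF1 T $$ (0,0) = T $$ (0,1)"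
  using assms by (auto simp: ris_channel_def HB0_def HF1_def scalar_prod_def numeral_2_eq_2 lessThan_Suc)

lemma ch2: assumes "T \<in> carrier_mat 2 2"
  shows "ris_channel HDa HB0 HF0 T \<in> carrier_mat 1 1"
    "ris_channel HDa HB0 HF0 T $$ (0,0) = 3/5 + T $$ (0,0)"
  using assms by (auto simp: ris_channel_def HB0_def HF0_def HDa_def scalar_prod_def numeral_2_eq_2 lessThan_Suc)


definition Pm :: "complex mat" where "Pm = mat 2 2 (\<lambda>(i,j). if i = j then 0 else 1)"
definition Qm :: "complex mat" where "Qm = mat 2 2 (\<lambda>(i,j). if i = j then (if i = 0 then -3/5 else 3/5) else 4/5)"

lemma two_cases: "(i::nat) < 2 \<Longrightarrow> i = 0 \<or> i = 1" by auto

lemma Pm_unit: "Pm \<in> unitary_mats 2"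
  unfolding unitary_mats_def
proof (intro CollectI conjI)
  show "Pm \<in> carrier_mat 2 2" by (simp add: Pm_def)
  show "Pm * herm Pm = 1\<^sub>m 2"
    by (rule eq_matI) (auto simp: Pm_def herm_def scalar_prod_def numeral_2_eq_2 lessThan_Suc dest!: two_cases)
qed

lemma Qm_unit: "Qm \<in> unitary_mats 2"
  unfolding unitary_mats_def
proof (intro CollectI conjI)
  show "Qm \<in> carrier_mat 2 2" by (simp add: Qm_def)
  show "Qm * herm Qm = 1\<^sub>m 2"
    by (rule eq_matI) (auto simp: Qm_def herm_def scalar_prod_def numeral_2_eq_2 lessThan_Suc dest!: two_cases)
qed

lemma diag_carrier: "T \<in> diag_ris_mats n \<Longrightarrow> T \<in> carrier_mat n n"
  by (auto simp: diag_ris_mats_def)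
lemma unit_carrier: "T \<in> unitary_mats n \<Longrightarrow> T \<in> carrier_mat n n"
  by (auto simp: unitary_mats_def)

lemma DoF_le1: assumes "H \<in> carrier_mat 1 1" shows "DoF H \<le> 1" "DoF H \<ge> 0"
  using DoF_1[OF assms] by auto

lemma diag_ne: "diag_ris_mats n \<noteq> {}"
  by (auto simp: diag_ris_mats_def)

lemma part1: "(SUP \<Theta>\<in>unitary_mats 2. DoF (ris_channel (0\<^sub>m 1 1) HB0 HF1 \<Theta>))
              > (SUP \<Theta>\<in>diag_ris_mats 2. DoF (ris_channel (0\<^sub>m 1 1) HB0 HF1 \<Theta>))"
proof -
  have "(\<lambda>\<Theta>. DoF (ris_channel (0\<^sub>m 1 1) HB0 HF1 \<Theta>)) ` diag_ris_mats 2 = {0}"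
  proof -
    have "DoF (ris_channel (0\<^sub>m 1 1) HB0 HF1 T) = 0" if "T \<in> diag_ris_mats 2" for T
    proof -
      have c: "T \<in> carrier_mat 2 2" using diag_carrier[OF that] .
      have "T $$ (0,1) = 0" using that by (auto simp: diag_ris_mats_def mat_diag_def)
      then show ?thesis using DoF_1[OF ch1(1)[OF c]] ch1(2)[OF c] by simp
    qed
    then show ?thesis using diag_ne[of 2] by (auto simp: image_iff)
  qed
  then have "(SUP \<Theta>\<in>diag_ris_mats 2. DoF (ris_channel (0\<^sub>m 1 1) HB0 HF1 \<Theta>)) = 0" by simp
  moreover have "(SUP \<Theta>\<in>unitary_mats 2. DoF (ris_channel (0\<^sub>m 1 1) HB0 HF1 \<Theta>)) \<ge> 1"
  proof -
    have bdd: "bdd_above ((\<lambda>\<Theta>. DoF (ris_channel (0\<^sub>m 1 1) HB0 HF1 \<Theta>)) ` unitary_mats 2)"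
      using DoF_le1(1)[OF ch1(1)[OF unit_carrier]] by (intro bdd_aboveI[where M=1]) blast
    have "DoF (ris_channel (0\<^sub>m 1 1) HB0 HF1 Pm) = 1"
      using DoF_1[OF ch1(1)[OF unit_carrier[OF Pm_unit]]] ch1(2)[OF unit_carrier[OF Pm_unit]]
      by (simp add: Pm_def)
    then show ?thesis using cSUP_upper[OF Pm_unit bdd] by simp
  qed
  ultimately show ?thesis by simp
qed

lemma part2: "(INF \<Theta>\<in>unitary_mats 2. DoF (ris_channel HDa HB0 HF0 \<Theta>))
              < (INF \<Theta>\<in>diag_ris_mats 2. DoF (ris_channel HDa HB0 HF0 \<Theta>))"
proof -
  have "(\<lambda>\<Theta>. DoF (ris_channel HDa HB0 HF0 \<Theta>)) ` diag_ris_mats 2 = {1}"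
  proof -
    have "DoF (ris_channel HDa HB0 HF0 T) = 1" if "T \<in> diag_ris_mats 2" for T
    proof -
      have c: "T \<in> carrier_mat 2 2" using diag_carrier[OF that] .
      obtain th0 where "T = mat_diag 2 (\<lambda>i. cis (th0 i))" using \<open>T \<in> diag_ris_mats 2\<close> unfolding diag_ris_mats_def by blast
      then have "T $$ (0,0) = cis (th0 0)" by (simp add: mat_diag_def)
      then obtain th where "T $$ (0,0) = cis th" by blast
      moreover have "3/5 + cis th \<noteq> 0"
      proof
        assume "3/5 + cis th = 0"
        then have "cis th = - 3/5" by (simp add: add_eq_0_iff)
        then have "cmod (cis th) = 3/5" by simp
        then show False by simp
      qed
      ultimately show ?thesis using DoF_1[OF ch2(1)[OF c]] ch2(2)[OF c] by simp
    qed
    then show ?thesis using diag_ne[of 2] by (auto simp: image_iff)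
  qed
  then have "(INF \<Theta>\<in>diag_ris_mats 2. DoF (ris_channel HDa HB0 HF0 \<Theta>)) = 1" by simp
  moreover have "(INF \<Theta>\<in>unitary_mats 2. DoF (ris_channel HDa HB0 HF0 \<Theta>)) \<le> 0"
  proof -
    have bdd: "bdd_below ((\<lambda>\<Theta>. DoF (ris_channel HDa HB0 HF0 \<Theta>)) ` unitary_mats 2)"
      using DoF_le1(2)[OF ch2(1)[OF unit_carrier]] by (intro bdd_belowI[where m=0]) blast
    have "DoF (ris_channel HDa HB0 HF0 Qm) = 0"
      using DoF_1[OF ch2(1)[OF unit_carrier[OF Qm_unit]]] ch2(2)[OF unit_carrier[OF Qm_unit]]
      by (simp add: Qm_def)
    then show ?thesis using cINF_lower[OF bdd Qm_unit] by simp
  qed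
  ultimately show ?thesis by simp
qed



lemma cars: "HB0 \<in> carrier_mat 1 2" "HF1 \<in> carrier_mat 2 1" "HF0 \<in> carrier_mat 2 1"
  "HDa \<in> carrier_mat 1 1" "(0\<^sub>m 1 1 :: complex mat) \<in> carrier_mat 1 1"
  by (auto simp: HB0_def HF1_def HF0_def HDa_def)

theorem proposition1:
  shows "(\<exists>nT nR nS HD HB HF.
            0 < nT \<and> 0 < nR \<and> 0 < nS \<and>
            HD \<in> carrier_mat nR nT \<and> HB \<in> carrier_mat nR nS \<and> HF \<in> carrier_mat nS nT \<and>
            (SUP \<Theta>\<in>unitary_mats nS. DoF (ris_channel HD HB HF \<Theta>))
              > (SUP \<Theta>\<in>diag_ris_mats nS. DoF (ris_channel HD HB HF \<Theta>)))
       \<and> (\<exists>nT nR nS HD HB HF.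
            0 < nT \<and> 0 < nR \<and> 0 < nS \<and>
            HD \<in> carrier_mat nR nT \<and> HB \<in> carrier_mat nR nS \<and> HF \<in> carrier_mat nS nT \<and>
            (INF \<Theta>\<in>unitary_mats nS. DoF (ris_channel HD HB HF \<Theta>))
              < (INF \<Theta>\<in>diag_ris_mats nS. DoF (ris_channel HD HB HF \<Theta>)))"
    apply (rule conjI)
   apply (rule exI[of _ 1], rule exI[of _ 1], rule exI[of _ 2], rule exI[of _ "0\<^sub>m 1 1"], rule exI[of _ HB0], rule exI[of _ HF1])
   apply (intro conjI; (rule cars part1 | simp))
  apply (rule exI[of _ 1], rule exI[of _ 1], rule exI[of _ 2], rule exI[of _ HDa], rule exI[of _ HB0], rule exI[of _ HF0])
  apply (intro conjI; (rule cars part2 | simp))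
  done

end
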